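(* With $\mathrm X$, $h$, $R$, $(\mathrm U_k)$ and $R_k$ as follows, the inductive limit topology on $R=\bigcup_k R_k$ (a set $W\subseteq R$ is open iff $W\cap R_k$ is open in $R_k$ for all $k$, each $R_k$ carrying the subspace topology from $\mathbb Z\times\mathrm X\times\mathbb Z\times\mathrm X$) coincides with the subspace topology on $R$ from the product topology of $\mathbb Z\times\mathrm X\times\mathbb Z\times\mathrm X$. Here: $\mathrm X$ is the Cantor set, $\mathrm U,\mathrm V\subseteq\mathrm X$ open with $\mathrm U\neq\mathrm X$, $h:\mathrm U\to\mathrm V$ a homeomorphism, $\mathrm X_{-n}=\mathrm{dom}(h^n)$, $R=\{(r,x,s,y): x\in\mathrm X_{s-r},\ h^{r-s}(x)=y\}$; $(\mathrm U_k)_{k\ge0}$ is an increasing sequence of clopen sets with union $\mathrm U$, $\mathrm X^k_{-n}=\mathrm{dom}((h|_{\mathrm U_k})^n)$, and $R_k=\{(r,x,s,y): x\in\mathrm X^k_{s-r},\ h^{r-s}(x)=y\}$.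
   Context: $\mathbb Z$ is discrete. $\mathrm{dom}(h^n)$ denotes the domain of the $n$-fold composition of the partial bijection $h$ (for $n<0$, of $(h^{-1})^{|n|}$; $\mathrm{dom}(h^0)=\mathrm X$). It holds that $R_k\subseteq R_{k+1}$ and $R=\bigcup_kR_k$. *)

theory Defs
  imports "HOL-Analysis.Analysis"
begin

definition cantor_top :: "(nat \<Rightarrow> bool) topology" where
  "cantor_top = product_topology (\<lambda>_. discrete_topology (UNIV :: bool set)) UNIV"

definition int_top :: "int topology" where
  "int_top = discrete_topology UNIV"

definition ZXZX_top :: "(int \<times> (nat \<Rightarrow> bool) \<times> int \<times> (nat \<Rightarrow> bool)) topology" where
  "ZXZX_top = prod_topology int_top (prod_topology cantor_top (prod_topology int_top cantor_top))"

text \<open>Domain of the n-fold composition of the partial map f with domain A (n natural).\<close>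
definition pdom :: "('a \<Rightarrow> 'a) \<Rightarrow> 'a set \<Rightarrow> nat \<Rightarrow> 'a set" where
  "pdom f A n = {x. \<forall>i<n. (f ^^ i) x \<in> A}"

text \<open>For the partial bijection h : U \<rightarrow> h`U: domain of h^m, m an integer
  (for m < 0 the |m|-fold power of the inverse h^{-1} : h`U \<rightarrow> U).\<close>
definition zdom :: "('a \<Rightarrow> 'a) \<Rightarrow> 'a set \<Rightarrow> int \<Rightarrow> 'a set" where
  "zdom h U m = (if 0 \<le> m then pdom h U (nat m) else pdom (inv_into U h) (h ` U) (nat (- m)))"

text \<open>Value of h^m (meaningful on zdom h U m).\<close>
definition zpow :: "('a \<Rightarrow> 'a) \<Rightarrow> 'a set \<Rightarrow> int \<Rightarrow> 'a \<Rightarrow> 'a" where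
  "zpow h U m x = (if 0 \<le> m then (h ^^ nat m) x else (inv_into U h ^^ nat (- m)) x)"

definition Rrel :: "('a \<Rightarrow> 'a) \<Rightarrow> 'a set \<Rightarrow> (int \<times> 'a \<times> int \<times> 'a) set" where
  "Rrel h U = {(r, x, s, y). x \<in> zdom h U (r - s) \<and> zpow h U (r - s) x = y}"

end

theory Submission
  imports Defs
begin

lemma pdom_Suc: "x \<in> pdom f B (Suc n) \<longleftrightarrow> x \<in> B \<and> f x \<in> pdom f B n"
  unfolding pdom_def by (auto simp: less_Suc_eq_0_disj funpow_Suc_right simp del: funpow.simps)

lemma pdom_open:
  assumes "continuous_map (subtopology T A) T f" "openin T B" "B \<subseteq> A" "topspace T = UNIV"
  shows "openin T (pdom f B n)"
proof (induction n)
  case 0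
  have "pdom f B 0 = topspace T" using assms(4) by (simp add: pdom_def)
  then show ?case by simp
next
  case (Suc n)
  have "openin (subtopology T A) {x \<in> topspace (subtopology T A). f x \<in> pdom f B n}"
    using openin_continuous_map_preimage[OF assms(1) Suc] .
  then obtain S where S: "openin T S" "{x \<in> topspace (subtopology T A). f x \<in> pdom f B n} = S \<inter> A"
    by (auto simp: openin_subtopology)
  have "pdom f B (Suc n) = S \<inter> B"
  proof -
    { fix x have "x \<in> pdom f B (Suc n) \<longleftrightarrow> x \<in> S \<inter> B"
      proof -
        have "x \<in> B \<Longrightarrow> (x \<in> S) = (f x \<in> pdom f B n)"
          using S(2) assms(3,4) by (auto simp: topspace_subtopology set_eq_iff)
        then show ?thesis by (auto simp: pdom_Suc)
      qed }
    then show ?thesis by blast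
  qed
  then show ?case using S(1) assms(2) by auto
qed

lemma iter_agree:
  assumes "\<And>z. z \<in> B \<Longrightarrow> f z = g z" "\<forall>i<n. (f^^i) x \<in> B" "j \<le> n"
  shows "(g^^j) x = (f^^j) x"
  using assms(3)
proof (induction j)
  case (Suc j)
  then have "(f^^j) x \<in> B" using assms(2) by auto
  then show ?case using Suc assms(1) by auto
qed simp

lemma fin_Uk:
  assumes "\<And>k. Uk k \<subseteq> Uk (Suc k)" "\<forall>i<(n::nat). f i \<in> (\<Union>k. Uk k)"
  shows "\<exists>k. \<forall>i<n. f i \<in> Uk (k::nat)"
  using assms(2)
proof (induction n)
  case (Suc n)
  then obtain k1 where k1: "\<forall>i<n. f i \<in> Uk k1" by auto
  obtain k2 where k2: "f n \<in> Uk k2" using Suc.prems by auto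
  have mono: "\<And>a b. a \<le> b \<Longrightarrow> Uk a \<subseteq> Uk b" using lift_Suc_mono_le[of Uk] assms(1) by blast
  have "\<forall>i<Suc n. f i \<in> Uk (max k1 k2)"
    using k1 k2 mono[of k1 "max k1 k2"] mono[of k2 "max k1 k2"] by (auto simp: less_Suc_eq)
  then show ?case by blast
qed simp

lemma inv_agree:
  assumes "inj_on h U" "A \<subseteq> U" "y \<in> h ` A"
  shows "inv_into A h y = inv_into U h y"
  using assms by (metis imageE inv_into_f_f inj_on_subset subsetD)

theorem mainTheorem9:
  fixes U V :: "(nat \<Rightarrow> bool) set"
    and h :: "(nat \<Rightarrow> bool) \<Rightarrow> (nat \<Rightarrow> bool)"
    and Uk :: "nat \<Rightarrow> (nat \<Rightarrow> bool) set"
  assumes "openin cantor_top U" and "openin cantor_top V" and "U \<noteq> UNIV"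
    and "homeomorphic_map (subtopology cantor_top U) (subtopology cantor_top V) h"
    and "\<And>k. closedin cantor_top (Uk k) \<and> openin cantor_top (Uk k)"
    and "\<And>k. Uk k \<subseteq> Uk (Suc k)"
    and "(\<Union>k. Uk k) = U"
  shows "\<forall>W \<subseteq> Rrel h U.
           (\<forall>k. openin (subtopology ZXZX_top (Rrel h (Uk k))) (W \<inter> Rrel h (Uk k)))
           \<longleftrightarrow> openin (subtopology ZXZX_top (Rrel h U)) W"
proof -
  have topC: "topspace cantor_top = UNIV" unfolding cantor_top_def by simp
  have topI: "topspace int_top = UNIV" unfolding int_top_def by simp
  have openI: "\<And>S. openin int_top S" unfolding int_top_def by simp
  have hom: "homeomorphic_map (subtopology cantor_top U) (subtopology cantor_top V) h" by fact
  have injh: "inj_on h U" using homeomorphic_imp_injective_map[OF hom] topC by simp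
  have hU: "h ` U = V" using homeomorphic_imp_surjective_map[OF hom] topC by simp
  have UkU: "\<And>k. Uk k \<subseteq> U" using assms(7) by blast
  have conth: "continuous_map (subtopology cantor_top U) cantor_top h"
    using homeomorphic_imp_continuous_map[OF hom] continuous_map_into_fulltopology by blast
  obtain g where g: "homeomorphic_maps (subtopology cantor_top U) (subtopology cantor_top V) h g"
    using hom homeomorphic_map_maps by blast
  have contg: "continuous_map (subtopology cantor_top V) cantor_top g"
    using g unfolding homeomorphic_maps_def using continuous_map_into_fulltopology by blast
  have geq: "\<And>y. y \<in> V \<Longrightarrow> g y = inv_into U h y"
  proof -
    fix y assume y: "y \<in> V"
    have "g y \<in> U" "h (g y) = y" using g y topC unfolding homeomorphic_maps_def continuous_map_def
      by (auto simp: topspace_subtopology)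
    then show "g y = inv_into U h y" using injh by (metis inv_into_f_f)
  qed
  have continv: "continuous_map (subtopology cantor_top V) cantor_top (inv_into U h)"
    using continuous_map_eq[OF contg] geq topC by (auto simp: topspace_subtopology)
  have openhUk: "\<And>k. openin cantor_top (h ` Uk k)"
  proof -
    fix k
    have "open_map (subtopology cantor_top U) (subtopology cantor_top V) h"
      using homeomorphic_imp_open_map[OF hom] .
    moreover have "openin (subtopology cantor_top U) (Uk k)"
      using assms(5)[of k] UkU by (metis openin_subtopology inf.absorb1)
    ultimately have "openin (subtopology cantor_top V) (h ` Uk k)" unfolding open_map_def by blast
    then show "openin cantor_top (h ` Uk k)" using assms(2) openin_trans_full by blast
  qed
  define Z where "Z k m = zdom h (Uk k) m" for k m
  have Zopen: "openin cantor_top (Z k m)" for k m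
  proof (cases "0 \<le> m")
    case True
    then show ?thesis unfolding Z_def zdom_def
      using pdom_open[OF conth _ UkU topC] assms(5) by simp
  next
    case False
    have sub: "h ` Uk k \<subseteq> V" using hU UkU by blast
    have c: "continuous_map (subtopology cantor_top (h ` Uk k)) cantor_top (inv_into (Uk k) h)"
      using continuous_map_eq[OF continuous_map_from_subtopology_mono[OF continv sub]] inv_agree[OF injh UkU[of k]]
      by (auto simp: topC)
    show ?thesis unfolding Z_def zdom_def
      using pdom_open[OF c openhUk subset_refl topC] False by simp
  qed
  have subk: "x \<in> zdom h U m \<and> zpow h (Uk k) m x = zpow h U m x" if x: "x \<in> zdom h (Uk k) m" for x k m
  proof (cases "0 \<le> m")
    case True
    then show ?thesis using x UkU[of k] unfolding zdom_def zpow_def pdom_def by auto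
  next
    case False
    define n where "n = nat (- m)"
    have xk: "\<forall>i<n. (inv_into (Uk k) h ^^ i) x \<in> h ` Uk k"
      using x False unfolding zdom_def pdom_def n_def by auto
    have ag: "(inv_into U h ^^ j) x = (inv_into (Uk k) h ^^ j) x" if "j \<le> n" for j
      using iter_agree[OF inv_agree[OF injh UkU[of k]] xk that] .
    have "\<forall>i<n. (inv_into U h ^^ i) x \<in> h ` U"
      using xk ag UkU[of k] by (metis image_mono less_imp_le subsetD)
    then show ?thesis using False ag[of n] unfolding zdom_def zpow_def pdom_def n_def by auto
  qed
  have cov: "\<exists>k. x \<in> zdom h (Uk k) m" if x: "x \<in> zdom h U m" for x m
  proof (cases "0 \<le> m")
    case True
    then have "\<forall>i<nat m. (h ^^ i) x \<in> (\<Union>k. Uk k)" using x assms(7) unfolding zdom_def pdom_def by auto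
    then obtain k where "\<forall>i<nat m. (h ^^ i) x \<in> Uk k" using fin_Uk[of Uk "nat m" "\<lambda>i. (h ^^ i) x", OF assms(6)] by blast
    then show ?thesis using True unfolding zdom_def pdom_def by auto
  next
    case False
    define n where "n = nat (- m)"
    have xU: "\<forall>i<n. (inv_into U h ^^ i) x \<in> h ` U"
      using x False unfolding zdom_def pdom_def n_def by auto
    have "\<forall>i<n. inv_into U h ((inv_into U h ^^ i) x) \<in> (\<Union>k. Uk k)"
      using xU assms(7) by (auto intro: inv_into_into)
    then obtain k where k: "\<forall>i<n. inv_into U h ((inv_into U h ^^ i) x) \<in> Uk k"
      using fin_Uk[of Uk n "\<lambda>i. inv_into U h ((inv_into U h ^^ i) x)", OF assms(6)] by blast
    have inB: "\<forall>i<n. (inv_into U h ^^ i) x \<in> h ` Uk k"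
    proof (intro allI impI)
      fix i assume "i < n"
      then have "(inv_into U h ^^ i) x = h (inv_into U h ((inv_into U h ^^ i) x))"
        "inv_into U h ((inv_into U h ^^ i) x) \<in> Uk k"
        using xU k by (auto simp: f_inv_into_f)
      then show "(inv_into U h ^^ i) x \<in> h ` Uk k" by (metis imageI)
    qed
    have ag: "(inv_into (Uk k) h ^^ j) x = (inv_into U h ^^ j) x" if "j \<le> n" for j
      using iter_agree[OF _ inB that, of "inv_into (Uk k) h"] inv_agree[OF injh UkU[of k]] by metis
    have "\<forall>i<n. (inv_into (Uk k) h ^^ i) x \<in> h ` Uk k" using inB ag by auto
    then show ?thesis using False unfolding zdom_def pdom_def n_def by auto
  qed
  define R where "R = Rrel h U"
  define Rk where "Rk k = Rrel h (Uk k)" for k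
  define Ok where "Ok k = {(r, x, s, y :: nat \<Rightarrow> bool). x \<in> Z k (r - s)}" for k
  have RkR: "Rk k \<subseteq> R" for k
    using subk unfolding Rk_def R_def Rrel_def by auto
  have Rk_eq: "Rk k = Ok k \<inter> R" for k
    using subk unfolding Rk_def R_def Rrel_def Ok_def Z_def by auto
  have O_open: "openin ZXZX_top (Ok k)" for k
  proof (subst openin_subopen, intro ballI)
    fix p assume p: "p \<in> Ok k"
    obtain r x s y where pe: "p = (r, x, s, y)" by (cases p) auto
    let ?T = "{r} \<times> Z k (r - s) \<times> {s} \<times> (UNIV :: (nat \<Rightarrow> bool) set)"
    have "openin ZXZX_top ?T" unfolding ZXZX_top_def
      by (simp add: openin_prod_Times_iff openI Zopen flip: topC)
    moreover have "p \<in> ?T" "?T \<subseteq> Ok k" using p pe unfolding Ok_def by auto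
    ultimately show "\<exists>T. openin ZXZX_top T \<and> p \<in> T \<and> T \<subseteq> Ok k" by blast
  qed
  have Rk_open: "openin (subtopology ZXZX_top R) (Rk k)" for k
    unfolding openin_subtopology using Rk_eq O_open by blast
  have cover: "R = (\<Union>k. Rk k)"
  proof
    show "(\<Union>k. Rk k) \<subseteq> R" using RkR by blast
    show "R \<subseteq> (\<Union>k. Rk k)"
    proof
      fix p assume p: "p \<in> R"
      obtain r x s y where pe: "p = (r, x, s, y)" by (cases p) auto
      have x: "x \<in> zdom h U (r - s)" using p pe unfolding R_def Rrel_def by auto
      then obtain k where "x \<in> zdom h (Uk k) (r - s)" using cov by blast
      then have "p \<in> Ok k" unfolding Ok_def Z_def pe by auto
      then show "p \<in> (\<Union>k. Rk k)" using Rk_eq p by blast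
    qed
  qed
  show ?thesis
  proof (fold R_def Rk_def, intro allI impI iffI)
    fix W assume WR: "W \<subseteq> R" and H: "\<forall>k. openin (subtopology ZXZX_top (Rk k)) (W \<inter> Rk k)"
    have A: "openin (subtopology ZXZX_top R) (W \<inter> Rk k)" for k
    proof (rule openin_trans_full[OF _ Rk_open])
      have "subtopology (subtopology ZXZX_top R) (Rk k) = subtopology ZXZX_top (Rk k)"
        using RkR[of k] by (simp add: subtopology_subtopology Int_absorb1)
      then show "openin (subtopology (subtopology ZXZX_top R) (Rk k)) (W \<inter> Rk k)" using H by simp
    qed
    have We: "W = (\<Union>k. W \<inter> Rk k)" using WR cover by blast
    have "openin (subtopology ZXZX_top R) (\<Union>k. W \<inter> Rk k)"
      by (rule openin_Union) (use A in auto)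
    then show "openin (subtopology ZXZX_top R) W" by (subst We)
  next
    fix W k assume "W \<subseteq> R" and H: "openin (subtopology ZXZX_top R) W"
    then obtain T where "openin ZXZX_top T" "W = T \<inter> R" unfolding openin_subtopology by blast
    moreover have "W \<inter> Rk k = T \<inter> Rk k" using calculation(2) RkR[of k] by blast
    ultimately show "openin (subtopology ZXZX_top (Rk k)) (W \<inter> Rk k)"
      unfolding openin_subtopology by blast
  qed
qed

end
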